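(* Let $U$ be a nonempty set, $\pi$ a fixed partition on $U$, and let $\mathcal{B}_\pi=\{\sigma\Rightarrow\pi:\sigma \text{ a partition on } U\}$. Let $\pi_{ns}$ be the set of blocks of $\pi$ with at least two elements. Then the map $\Phi:\mathcal{B}_\pi\to\wp(\pi_{ns})$ sending $\sigma\Rightarrow\pi$ to the set of blocks $B\in\pi_{ns}$ that are contained in some block of $\sigma$ is a well-defined bijection, and for all partitions $\sigma,\tau$ on $U$: (i) $(\sigma\Rightarrow\pi)\vee(\tau\Rightarrow\pi)\in\mathcal{B}_\pi$ and $\Phi$ of it equals $\Phi(\sigma\Rightarrow\pi)\cup\Phi(\tau\Rightarrow\pi)$; (ii) $(\sigma\Rightarrow\pi)\wedge(\tau\Rightarrow\pi)\in\mathcal{B}_\pi$ and $\Phi$ of it equals $\Phi(\sigma\Rightarrow\pi)\cap\Phi(\tau\Rightarrow\pi)$; (iii) $(\sigma\Rightarrow\pi)\Rightarrow(\tau\Rightarrow\pi)\in\mathcal{B}_\pi$ and $\Phi$ of it equals $(\pi_{ns}\setminus\Phi(\sigma\Rightarrow\pi))\cup\Phi(\tau\Rightarrow\pi)$; in particular $\Phi((\sigma\Rightarrow\pi)\Rightarrow\pi)=\pi_{ns}\setminus\Phi(\sigma\Rightarrow\pi)$; (iv) $\pi=\mathbf{1}\Rightarrow\pi\in\mathcal{B}_\pi$ with $\Phi(\pi)=\emptyset$ and $\mathbf{1}=\pi\Rightarrow\pi\in\mathcal{B}_\pi$ with $\Phi(\mathbf{1})=\pi_{ns}$. Consequently $\mathcal{B}_\pi$,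 with the partition join, meet, and $\pi$-negation $\overset{\pi}{\lnot}\sigma:=\sigma\Rightarrow\pi$ as complement, is a Boolean algebra isomorphic to $\wp(\pi_{ns})$, with bottom $\pi$ and top $\mathbf{1}$, contained in the interval $[\pi,\mathbf{1}]$ of the refinement order.
   Context: A partition on a set $U$ is a set of non-empty, pairwise disjoint subsets of $U$ (called blocks) whose union is $U$. Refinement: $\sigma\precsim\pi$ iff every block of $\pi$ is contained in some block of $\sigma$. The discrete partition is $\mathbf{1}=\{\{u\}:u\in U\}$ and the indiscrete partition is $\mathbf{0}=\{U\}$. The join $\pi\vee\sigma$ is the partition whose blocks are the non-empty intersections $B\cap C$, $B\in\pi$, $C\in\sigma$. The meet $\pi\wedge\sigma$ is the partition whose blocks are the equivalence classes of the equivalence relation on $U$ generated by: $u\sim u'$ if $u,u'$ lie in a common block of $\pi$ or in a common block of $\sigma$. The partition implication $\sigma\Rightarrow\pi$ is the partition obtained from $\pi$ by replacing every block $B\in\pi$ that is contained in some block of $\sigma$ by the singletons $\{u\}$, $u\in B$, and leaving every block of $\pi$ not contained in any block of $\sigma$ unchanged. *)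

theory Defs
  imports Main "HOL-Library.Disjoint_Sets"
begin

definition prefines :: "'a set set \<Rightarrow> 'a set set \<Rightarrow> bool" where
  "prefines \<sigma> \<pi> \<longleftrightarrow> (\<forall>B\<in>\<pi>. \<exists>C\<in>\<sigma>. B \<subseteq> C)"

text \<open>Discrete partition 1 and indiscrete partition 0.\<close>
definition pdiscrete :: "'a set \<Rightarrow> 'a set set" where
  "pdiscrete U = {{u} | u. u \<in> U}"

definition pindiscrete :: "'a set \<Rightarrow> 'a set set" where
  "pindiscrete U = {U}"

definition pjoin :: "'a set set \<Rightarrow> 'a set set \<Rightarrow> 'a set set" where
  "pjoin \<pi> \<sigma> = {B \<inter> C | B C. B \<in> \<pi> \<and> C \<in> \<sigma> \<and> B \<inter> C \<noteq> {}}"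

definition pmeet :: "'a set \<Rightarrow> 'a set set \<Rightarrow> 'a set set \<Rightarrow> 'a set set" where
  "pmeet U \<pi> \<sigma> =
     U // (({(u, v). \<exists>B \<in> \<pi> \<union> \<sigma>. u \<in> B \<and> v \<in> B} \<union> Id_on U)\<^sup>*)"

definition pimp :: "'a set set \<Rightarrow> 'a set set \<Rightarrow> 'a set set" where
  "pimp \<sigma> \<pi> =
     {B \<in> \<pi>. \<not> (\<exists>C\<in>\<sigma>. B \<subseteq> C)}
     \<union> (\<Union>B \<in> {B \<in> \<pi>. \<exists>C\<in>\<sigma>. B \<subseteq> C}. {{u} | u. u \<in> B})"

definition pns :: "'a set set \<Rightarrow> 'a set set" where
  "pns \<pi> = {B \<in> \<pi>. \<exists>x y. x \<in> B \<and> y \<in> B \<and> x \<noteq> y}"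

definition Bpi :: "'a set \<Rightarrow> 'a set set \<Rightarrow> 'a set set set" where
  "Bpi U \<pi> = {pimp \<sigma> \<pi> | \<sigma>. partition_on U \<sigma>}"

definition Phi_of :: "'a set set \<Rightarrow> 'a set set \<Rightarrow> 'a set set" where
  "Phi_of \<pi> \<sigma> = {B \<in> pns \<pi>. \<exists>C\<in>\<sigma>. B \<subseteq> C}"

text \<open>Phi on B_pi: Phi(sigma \<Rightarrow> pi) = Phi_of pi sigma, using some chosen
  representative sigma (well-definedness is part of the theorem).\<close>
definition Phi :: "'a set \<Rightarrow> 'a set set \<Rightarrow> 'a set set \<Rightarrow> 'a set set" where
  "Phi U \<pi> \<rho> = Phi_of \<pi> (SOME \<sigma>. partition_on U \<sigma> \<and> \<rho> = pimp \<sigma> \<pi>)"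

end

theory Submission
  imports Defs
begin

definition G :: "'a set set \<Rightarrow> 'a set set \<Rightarrow> 'a set set" where
  "G \<pi> S = (\<pi> - S) \<union> {{u} | u. u \<in> \<Union>S}"

lemma pe: "partition_on U P \<Longrightarrow> B\<in>P \<Longrightarrow> C\<in>P \<Longrightarrow> x\<in>B \<Longrightarrow> x\<in>C \<Longrightarrow> B=C"
  unfolding partition_on_def disjoint_def by blast

lemma pU: "partition_on U P \<Longrightarrow> x \<in> U \<Longrightarrow> \<exists>B\<in>P. x \<in> B"
  unfolding partition_on_def by blast

lemma pU2: "partition_on U P \<Longrightarrow> B \<in> P \<Longrightarrow> B \<subseteq> U"
  unfolding partition_on_def by blast

lemma pne: "partition_on U P \<Longrightarrow> B \<in> P \<Longrightarrow> B \<noteq> {}"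
  unfolding partition_on_def by blast

lemma G_mem: "X \<in> G \<pi> S \<longleftrightarrow> (X \<in> \<pi> \<and> X \<notin> S) \<or> (\<exists>u B. B \<in> S \<and> u \<in> B \<and> X = {u})"
  unfolding G_def by blast

lemma G_part: assumes p: "partition_on U \<pi>" and S: "S \<subseteq> \<pi>"
  shows "partition_on U (G \<pi> S)"
proof (rule partition_onI)
  show "\<Union>(G \<pi> S) = U"
  proof
    show "\<Union>(G \<pi> S) \<subseteq> U" using p S pU2[OF p] unfolding G_def by blast
    show "U \<subseteq> \<Union>(G \<pi> S)"
    proof
      fix x assume "x \<in> U"
      then obtain B where "B \<in> \<pi>" "x \<in> B" using pU[OF p] by blast
      then show "x \<in> \<Union>(G \<pi> S)" unfolding G_def by (cases "B \<in> S") blast+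
    qed
  qed
  show "{} \<notin> G \<pi> S" using pne[OF p] unfolding G_def by blast
  fix P Q assume "P \<in> G \<pi> S" "Q \<in> G \<pi> S" "P \<noteq> Q"
  then show "disjnt P Q" unfolding G_mem disjnt_def using pe[OF p] S by blast
qed

lemma ns_single: "Y \<in> \<pi> \<Longrightarrow> Y \<notin> pns \<pi> \<Longrightarrow> u \<in> Y \<Longrightarrow> Y = {u}"
  unfolding pns_def by blast

lemma single_ns: "{u} \<notin> pns \<pi>"
  unfolding pns_def by blast

lemma pimp_G: assumes p: "partition_on U \<pi>" and s: "partition_on U \<sigma>"
  shows "pimp \<sigma> \<pi> = G \<pi> (Phi_of \<pi> \<sigma>)"
proof (rule set_eqI, rule iffI)
  fix X assume "X \<in> pimp \<sigma> \<pi>"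
  then consider "X \<in> \<pi>" "\<not> (\<exists>C\<in>\<sigma>. X \<subseteq> C)"
    | u B where "B \<in> \<pi>" "\<exists>C\<in>\<sigma>. B \<subseteq> C" "u \<in> B" "X = {u}"
    unfolding pimp_def by blast
  then show "X \<in> G \<pi> (Phi_of \<pi> \<sigma>)"
  proof cases
    case 1
    then have "X \<notin> Phi_of \<pi> \<sigma>" unfolding Phi_of_def by blast
    with 1 show ?thesis unfolding G_mem by blast
  next
    case 2
    show ?thesis
    proof (cases "B \<in> pns \<pi>")
      case True
      then have "B \<in> Phi_of \<pi> \<sigma>" using 2 unfolding Phi_of_def by blast
      then show ?thesis using 2 unfolding G_mem by blast
    next
      case False
      then have "B = {u}" using ns_single 2 by metis
      moreover have "B \<notin> Phi_of \<pi> \<sigma>" using False unfolding Phi_of_def by blast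
      ultimately show ?thesis using 2 unfolding G_mem by blast
    qed
  qed
next
  fix X assume X: "X \<in> G \<pi> (Phi_of \<pi> \<sigma>)"
  show "X \<in> pimp \<sigma> \<pi>"
  proof (cases "X \<in> \<pi> \<and> X \<notin> Phi_of \<pi> \<sigma>")
    case True
    show ?thesis
    proof (cases "\<exists>C\<in>\<sigma>. X \<subseteq> C")
      case True2: True
      then have "X \<notin> pns \<pi>" using True unfolding Phi_of_def by blast
      moreover obtain u where "u \<in> X" using pne[OF p] True by blast
      ultimately have "X = {u}" using ns_single True by metis
      then show ?thesis unfolding pimp_def using True True2 \<open>u \<in> X\<close> by blast
    next
      case False
      then show ?thesis unfolding pimp_def using True by blast
    qed
  next
    case False
    then obtain u B where "B \<in> Phi_of \<pi> \<sigma>" "u \<in> B" "X = {u}" using X unfolding G_mem by blast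
    then show ?thesis unfolding pimp_def Phi_of_def pns_def by blast
  qed
qed

lemma pns_sub: "pns \<pi> \<subseteq> \<pi>" unfolding pns_def by blast

lemma Phi_G: assumes p: "partition_on U \<pi>" and S: "S \<subseteq> \<pi>"
  shows "Phi_of \<pi> (G \<pi> S) = pns \<pi> - S"
proof (rule set_eqI, rule iffI)
  fix B assume "B \<in> Phi_of \<pi> (G \<pi> S)"
  then obtain C where B: "B \<in> pns \<pi>" "C \<in> G \<pi> S" "B \<subseteq> C" unfolding Phi_of_def by blast
  then obtain x y where xy: "x \<in> B" "y \<in> B" "x \<noteq> y" "B \<in> \<pi>" unfolding pns_def by blast
  have C: "C \<in> \<pi> \<and> C \<notin> S"
  proof (rule ccontr)
    assume "\<not> (C \<in> \<pi> \<and> C \<notin> S)"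
    then obtain u where "C = {u}" using B(2) unfolding G_mem by blast
    then have "x = u" "y = u" using B(3) xy by auto
    with xy show False by simp
  qed
  have "B = C" using pe[OF p, of B C x] xy B C by blast
  then show "B \<in> pns \<pi> - S" using B C by simp
next
  fix B assume "B \<in> pns \<pi> - S"
  then have "B \<in> G \<pi> S" "B \<in> pns \<pi>" using pns_sub unfolding G_mem by blast+
  then show "B \<in> Phi_of \<pi> (G \<pi> S)" unfolding Phi_of_def by blast
qed

lemma G_inj: assumes S: "S \<subseteq> pns \<pi>" and T: "T \<subseteq> pns \<pi>" and e: "G \<pi> S = G \<pi> T"
  shows "S = T"
proof -
  have k: "B \<in> R \<longleftrightarrow> B \<in> pns \<pi> \<and> B \<notin> G \<pi> R" if "R \<subseteq> pns \<pi>" for B R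
  proof
    assume "B \<in> R"
    then have "B \<in> pns \<pi>" using that by blast
    moreover have "B \<notin> G \<pi> R"
    proof
      assume "B \<in> G \<pi> R"
      then obtain u C where "C \<in> R" "u \<in> C" "B = {u}" using \<open>B \<in> R\<close> unfolding G_mem by blast
      then show False using single_ns \<open>B \<in> pns \<pi>\<close> by metis
    qed
    ultimately show "B \<in> pns \<pi> \<and> B \<notin> G \<pi> R" by blast
  next
    assume "B \<in> pns \<pi> \<and> B \<notin> G \<pi> R"
    then show "B \<in> R" using pns_sub unfolding G_mem by blast
  qed
  show ?thesis using k[OF S] k[OF T] e by blast
qed

lemma Bpi_eq: assumes p: "partition_on U \<pi>"
  shows "Bpi U \<pi> = G \<pi> ` Pow (pns \<pi>)"
proof
  show "Bpi U \<pi> \<subseteq> G \<pi> ` Pow (pns \<pi>)"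
  proof
    fix X assume "X \<in> Bpi U \<pi>"
    then obtain \<sigma> where s: "partition_on U \<sigma>" "X = pimp \<sigma> \<pi>" unfolding Bpi_def by blast
    then have "X = G \<pi> (Phi_of \<pi> \<sigma>)" using pimp_G[OF p] by blast
    moreover have "Phi_of \<pi> \<sigma> \<in> Pow (pns \<pi>)" unfolding Phi_of_def by blast
    ultimately show "X \<in> G \<pi> ` Pow (pns \<pi>)" by blast
  qed
  show "G \<pi> ` Pow (pns \<pi>) \<subseteq> Bpi U \<pi>"
  proof
    fix X assume "X \<in> G \<pi> ` Pow (pns \<pi>)"
    then obtain S where S: "S \<subseteq> pns \<pi>" "X = G \<pi> S" by blast
    let ?s = "G \<pi> (pns \<pi> - S)"
    have ps: "partition_on U ?s" using G_part[OF p] pns_sub by blast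
    have "Phi_of \<pi> ?s = S" using Phi_G[OF p, of "pns \<pi> - S"] pns_sub S by blast
    then have "X = pimp ?s \<pi>" using pimp_G[OF p ps] S by simp
    then show "X \<in> Bpi U \<pi>" unfolding Bpi_def using ps by blast
  qed
qed

lemma Phi_G2: assumes p: "partition_on U \<pi>" and S: "S \<subseteq> pns \<pi>"
  shows "Phi U \<pi> (G \<pi> S) = S"
proof -
  let ?s = "G \<pi> (pns \<pi> - S)"
  have ps: "partition_on U ?s" using G_part[OF p] pns_sub by blast
  have "Phi_of \<pi> ?s = S" using Phi_G[OF p, of "pns \<pi> - S"] pns_sub S by blast
  then have ex: "partition_on U ?s \<and> G \<pi> S = pimp ?s \<pi>" using pimp_G[OF p ps] ps by simp
  let ?t = "SOME \<sigma>. partition_on U \<sigma> \<and> G \<pi> S = pimp \<sigma> \<pi>"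
  have t: "partition_on U ?t \<and> G \<pi> S = pimp ?t \<pi>" by (rule someI, rule ex)
  then have "G \<pi> S = G \<pi> (Phi_of \<pi> ?t)" using pimp_G[OF p] by blast
  moreover have "Phi_of \<pi> ?t \<subseteq> pns \<pi>" unfolding Phi_of_def by blast
  ultimately have "Phi_of \<pi> ?t = S" using G_inj S by metis
  then show ?thesis unfolding Phi_def .
qed

lemma join_G: assumes p: "partition_on U \<pi>" and S: "S \<subseteq> \<pi>" and T: "T \<subseteq> \<pi>"
  shows "pjoin (G \<pi> S) (G \<pi> T) = G \<pi> (S \<union> T)"
proof (rule set_eqI, rule iffI)
  fix X assume "X \<in> pjoin (G \<pi> S) (G \<pi> T)"
  then obtain B C where X: "X = B \<inter> C" "B \<in> G \<pi> S" "C \<in> G \<pi> T" "B \<inter> C \<noteq> {}"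
    unfolding pjoin_def by blast
  then obtain x where x: "x \<in> B" "x \<in> C" by blast
  show "X \<in> G \<pi> (S \<union> T)"
  proof (cases "B \<in> \<pi> \<and> B \<notin> S")
    case True
    show ?thesis
    proof (cases "C \<in> \<pi> \<and> C \<notin> T")
      case True2: True
      then have "B = C" using pe[OF p, of B C x] True x by blast
      then show ?thesis using True True2 X unfolding G_mem by auto
    next
      case False
      then obtain u D where "D \<in> T" "u \<in> D" "C = {u}" using X unfolding G_mem by blast
      then show ?thesis using X x unfolding G_mem by blast
    qed
  next
    case False
    then obtain u D where "D \<in> S" "u \<in> D" "B = {u}" using X unfolding G_mem by blast
    then show ?thesis using X x unfolding G_mem by blast
  qed
next
  fix X assume X: "X \<in> G \<pi> (S \<union> T)"
  have cov: "\<exists>C\<in>G \<pi> R. u \<in> C" if "u \<in> U" "R \<subseteq> \<pi>" for u R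
    using pU[OF G_part[OF p that(2)] that(1)] .
  show "X \<in> pjoin (G \<pi> S) (G \<pi> T)"
  proof (cases "X \<in> \<pi> \<and> X \<notin> S \<union> T")
    case True
    then have "X \<in> G \<pi> S" "X \<in> G \<pi> T" "X \<noteq> {}" unfolding G_mem using pne[OF p] by auto
    then show ?thesis unfolding pjoin_def by blast
  next
    case False
    then obtain u D where D: "D \<in> S \<union> T" "u \<in> D" "X = {u}" using X unfolding G_mem by blast
    then have uU: "u \<in> U" using pU2[OF p] S T by blast
    show ?thesis
    proof (cases "D \<in> S")
      case True
      then have "{u} \<in> G \<pi> S" using D unfolding G_mem by blast
      moreover obtain C where "C \<in> G \<pi> T" "u \<in> C" using cov[OF uU T] by blast
      moreover have "X = {u} \<inter> C" using D \<open>u \<in> C\<close> by blast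
      ultimately show ?thesis unfolding pjoin_def by blast
    next
      case False
      then have "{u} \<in> G \<pi> T" using D unfolding G_mem by blast
      moreover obtain C where "C \<in> G \<pi> S" "u \<in> C" using cov[OF uU S] by blast
      moreover have "X = C \<inter> {u}" using D \<open>u \<in> C\<close> by blast
      ultimately show ?thesis unfolding pjoin_def by blast
    qed
  qed
qed

lemma meet_G: assumes p: "partition_on U \<pi>" and S: "S \<subseteq> \<pi>" and T: "T \<subseteq> \<pi>"
  shows "pmeet U (G \<pi> S) (G \<pi> T) = G \<pi> (S \<inter> T)"
proof -
  let ?E = "{(x,y). \<exists>B\<in>G \<pi> (S \<inter> T). x\<in>B \<and> y\<in>B}"
  have pST: "partition_on U (G \<pi> (S \<inter> T))" using G_part[OF p] S by blast
  have cov: "\<exists>C\<in>G \<pi> (S \<inter> T). u \<in> C" if "u \<in> U" for u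
    using pU[OF pST that] .
  have L1: "\<exists>B\<in>G \<pi> (S \<inter> T). a\<in>B \<and> b\<in>B"
    if h: "(\<exists>B\<in>G \<pi> S \<union> G \<pi> T. a\<in>B \<and> b\<in>B) \<or> (a \<in> U \<and> a = b)" for a b
  proof (cases "a \<in> U \<and> a = b")
    case True then show ?thesis using cov by blast
  next
    case False
    then obtain B where B: "B \<in> G \<pi> S \<union> G \<pi> T" "a \<in> B" "b \<in> B" using h by blast
    show ?thesis
    proof (cases "B \<in> \<pi> \<and> B \<notin> S \<inter> T")
      case True
      then have "B \<in> G \<pi> (S \<inter> T)" unfolding G_mem by blast
      then show ?thesis using B by blast
    next
      case False
      moreover have "B \<in> G \<pi> S \<or> B \<in> G \<pi> T" using B(1) by blast
      ultimately obtain w D where wD: "D \<in> S \<union> T" "w \<in> D" "B = {w}" unfolding G_mem by blast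
      then have "w \<in> U" using pU2[OF p] S T by blast
      moreover have "a = w" "b = w" using wD B by auto
      ultimately show ?thesis using cov by blast
    qed
  qed
  have L2: "(\<exists>B\<in>G \<pi> S \<union> G \<pi> T. a\<in>B \<and> b\<in>B) \<or> (a \<in> U \<and> a = b)"
    if h: "\<exists>B\<in>G \<pi> (S \<inter> T). a\<in>B \<and> b\<in>B" for a b
  proof -
    obtain B where B: "B \<in> G \<pi> (S \<inter> T)" "a \<in> B" "b \<in> B" using h by blast
    show ?thesis
    proof (cases "B \<in> \<pi> \<and> B \<notin> S \<inter> T")
      case True
      then have "B \<in> G \<pi> S \<union> G \<pi> T" by (auto simp: G_mem)
      then show ?thesis using B by blast
    next
      case False
      then obtain w D where wD: "D \<in> S \<inter> T" "w \<in> D" "B = {w}" using B unfolding G_mem by blast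
      then have "w \<in> U" using pU2[OF p] S T by blast
      moreover have "a = w" "b = w" using wD B by auto
      ultimately show ?thesis by blast
    qed
  qed
  have R: "{(u, v). \<exists>B \<in> G \<pi> S \<union> G \<pi> T. u \<in> B \<and> v \<in> B} \<union> Id_on U = ?E"
  proof (rule set_eqI)
    fix z :: "'a \<times> 'a"
    obtain a b where z: "z = (a, b)" by (cases z)
    show "z \<in> {(u, v). \<exists>B \<in> G \<pi> S \<union> G \<pi> T. u \<in> B \<and> v \<in> B} \<union> Id_on U \<longleftrightarrow> z \<in> ?E"
      unfolding z using L1[of a b] L2[of a b] by (auto simp: Id_on_iff)
  qed
  have eqv: "equiv U ?E" by (rule equiv_partition_on[OF pST])
  then have tr: "trans ?E" by (auto elim: equivE)
  have star: "?E\<^sup>* = ?E \<union> Id" using tr by (simp add: rtrancl_trancl_reflcl)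
  have q: "U // (?E \<union> Id) = U // ?E"
  proof -
    have "(?E \<union> Id) `` {x} = ?E `` {x}" if "x \<in> U" for x
      using cov[OF that] by blast
    then show ?thesis unfolding quotient_def by auto
  qed
  show ?thesis unfolding pmeet_def R star q using partition_on_eq_quotient[OF pST] .
qed

lemma G_big: assumes "C \<in> G \<pi> S" "x \<in> C" "y \<in> C" "x \<noteq> y" shows "C \<in> \<pi> \<and> C \<notin> S"
proof (rule ccontr)
  assume "\<not> (C \<in> \<pi> \<and> C \<notin> S)"
  then obtain u where "C = {u}" using assms(1) unfolding G_mem by blast
  then show False using assms by auto
qed

lemma imp_G: assumes p: "partition_on U \<pi>" and S: "S \<subseteq> pns \<pi>" and T: "T \<subseteq> pns \<pi>"
  shows "pimp (G \<pi> S) (G \<pi> T) = G \<pi> ((pns \<pi> - S) \<union> T)"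
proof -
  have Sp: "S \<subseteq> \<pi>" "T \<subseteq> \<pi>" using S T pns_sub by blast+
  have ct: "(\<exists>C\<in>G \<pi> S. Y \<subseteq> C) \<longleftrightarrow> Y \<notin> S" if Y: "Y \<in> G \<pi> T" for Y
  proof
    assume "\<exists>C\<in>G \<pi> S. Y \<subseteq> C"
    then obtain C where C: "C \<in> G \<pi> S" "Y \<subseteq> C" by blast
    show "Y \<notin> S"
    proof
      assume YS: "Y \<in> S"
      then obtain x y where xy: "x \<in> Y" "y \<in> Y" "x \<noteq> y" "Y \<in> \<pi>" using S unfolding pns_def by blast
      have "C \<in> \<pi> \<and> C \<notin> S" using G_big[OF C(1), of x y] xy C(2) by blast
      then have "Y = C" using pe[OF p, of Y C x] xy C by blast
      then show False using YS \<open>C \<in> \<pi> \<and> C \<notin> S\<close> by blast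
    qed
  next
    assume YS: "Y \<notin> S"
    show "\<exists>C\<in>G \<pi> S. Y \<subseteq> C"
    proof (cases "Y \<in> \<pi> \<and> Y \<notin> T")
      case True then have "Y \<in> G \<pi> S" using YS unfolding G_mem by blast
      then show ?thesis by blast
    next
      case False
      then obtain w D where wD: "D \<in> T" "w \<in> D" "Y = {w}" using Y unfolding G_mem by blast
      then have "w \<in> U" using pU2[OF p] Sp by blast
      then obtain C where "C \<in> G \<pi> S" "w \<in> C" using pU[OF G_part[OF p Sp(1)]] by blast
      then show ?thesis using wD by blast
    qed
  qed
  have e: "pimp (G \<pi> S) (G \<pi> T) = {Y \<in> G \<pi> T. Y \<in> S} \<union> {{u} | u Y. Y \<in> G \<pi> T \<and> Y \<notin> S \<and> u \<in> Y}"
  proof -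
    have 1: "{B \<in> G \<pi> T. \<not> (\<exists>C\<in>G \<pi> S. B \<subseteq> C)} = {Y \<in> G \<pi> T. Y \<in> S}" using ct by blast
    have 2: "{B \<in> G \<pi> T. \<exists>C\<in>G \<pi> S. B \<subseteq> C} = {Y \<in> G \<pi> T. Y \<notin> S}" using ct by blast
    show ?thesis unfolding pimp_def 1 2 by blast
  qed
  show ?thesis
  proof (rule set_eqI, rule iffI)
    fix X assume "X \<in> pimp (G \<pi> S) (G \<pi> T)"
    then consider "X \<in> G \<pi> T" "X \<in> S" | u Y where "Y \<in> G \<pi> T" "Y \<notin> S" "u \<in> Y" "X = {u}"
      unfolding e by blast
    then show "X \<in> G \<pi> ((pns \<pi> - S) \<union> T)"
    proof cases
      case 1
      have XP: "X \<in> pns \<pi>" using 1 S by blast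
      have "X \<notin> T"
      proof
        assume "X \<in> T"
        then obtain u where "X = {u}" using 1(1) unfolding G_mem by blast
        then show False using XP single_ns[of u \<pi>] by simp
      qed
      then show ?thesis using XP pns_sub 1(2) unfolding G_mem by blast
    next
      case 2
      show ?thesis
      proof (cases "Y \<in> \<pi> \<and> Y \<notin> T")
        case True
        show ?thesis
        proof (cases "Y \<in> pns \<pi>")
          case True
          then show ?thesis using 2 unfolding G_mem by blast
        next
          case False
          then have "Y = {u}" using ns_single[of Y \<pi> u] True 2 by blast
          then show ?thesis using 2 True False unfolding G_mem by blast
        qed
      next
        case False
        then obtain w D where "D \<in> T" "w \<in> D" "Y = {w}" using 2 unfolding G_mem by blast
        then show ?thesis using 2 unfolding G_mem by blast
      qed
    qed
  next
    fix X assume X: "X \<in> G \<pi> ((pns \<pi> - S) \<union> T)"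
    show "X \<in> pimp (G \<pi> S) (G \<pi> T)"
    proof (cases "X \<in> \<pi> \<and> X \<notin> (pns \<pi> - S) \<union> T")
      case True
      show ?thesis
      proof (cases "X \<in> S")
        case True2: True
        then show ?thesis unfolding e using True unfolding G_mem by blast
      next
        case False
        then have "X \<notin> pns \<pi>" using True by blast
        moreover obtain u where "u \<in> X" using pne[OF p] True by blast
        ultimately have "X = {u}" using ns_single[of X \<pi> u] True by blast
        then show ?thesis unfolding e using True False \<open>u \<in> X\<close> unfolding G_mem by blast
      qed
    next
      case False
      then obtain u D where D: "D \<in> (pns \<pi> - S) \<union> T" "u \<in> D" "X = {u}" using X unfolding G_mem by blast
      have nS: "{u} \<notin> S" using S single_ns[of u \<pi>] by blast
      show ?thesis
      proof (cases "D \<in> T")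
        case True
        then have "{u} \<in> G \<pi> T" using D unfolding G_mem by blast
        then show ?thesis unfolding e using nS D by blast
      next
        case False
        then have "D \<in> G \<pi> T" "D \<notin> S" using D pns_sub unfolding G_mem by blast+
        then show ?thesis unfolding e using D by blast
      qed
    qed
  qed
qed

lemma G_empty: "G \<pi> {} = \<pi>" unfolding G_def by auto

lemma G_pns: assumes p: "partition_on U \<pi>" shows "G \<pi> (pns \<pi>) = pdiscrete U"
proof (rule set_eqI, rule iffI)
  fix X assume X: "X \<in> G \<pi> (pns \<pi>)"
  have "\<exists>u. X = {u} \<and> u \<in> U"
  proof (cases "X \<in> \<pi> \<and> X \<notin> pns \<pi>")
    case True
    moreover obtain u where "u \<in> X" using pne[OF p] calculation by blast
    ultimately have "X = {u}" "u \<in> U" using ns_single[of X \<pi> u] pU2[OF p, of X] by blast+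
    then show ?thesis by blast
  next
    case False
    then obtain u B where "B \<in> pns \<pi>" "u \<in> B" "X = {u}" using X unfolding G_mem by blast
    then show ?thesis using pU2[OF p] pns_sub by blast
  qed
  then show "X \<in> pdiscrete U" unfolding pdiscrete_def by blast
next
  fix X assume "X \<in> pdiscrete U"
  then obtain u where u: "u \<in> U" "X = {u}" unfolding pdiscrete_def by blast
  then obtain B where B: "B \<in> \<pi>" "u \<in> B" using pU[OF p] by blast
  show "X \<in> G \<pi> (pns \<pi>)"
  proof (cases "B \<in> pns \<pi>")
    case True then show ?thesis using u B unfolding G_mem by blast
  next
    case False then have "B = {u}" using ns_single[of B \<pi> u] B by blast
    then show ?thesis using u B False unfolding G_mem by blast
  qed
qed

lemma G_ref: assumes p: "partition_on U \<pi>" and S: "S \<subseteq> \<pi>"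
  shows "prefines \<pi> (G \<pi> S) \<and> prefines (G \<pi> S) (pdiscrete U)"
proof
  show "prefines \<pi> (G \<pi> S)" unfolding prefines_def
  proof
    fix X assume X: "X \<in> G \<pi> S"
    show "\<exists>C\<in>\<pi>. X \<subseteq> C"
    proof (cases "X \<in> \<pi> \<and> X \<notin> S")
      case True then show ?thesis by blast
    next
      case False
      then obtain u B where "B \<in> S" "u \<in> B" "X = {u}" using X unfolding G_mem by blast
      then show ?thesis using S by blast
    qed
  qed
  show "prefines (G \<pi> S) (pdiscrete U)" unfolding prefines_def
  proof
    fix X assume "X \<in> pdiscrete U"
    then obtain u where u: "u \<in> U" "X = {u}" unfolding pdiscrete_def by blast
    obtain C where "C \<in> G \<pi> S" "u \<in> C" using pU[OF G_part[OF p S] u(1)] by blast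
    then show "\<exists>C\<in>G \<pi> S. X \<subseteq> C" using u by blast
  qed
qed


lemma pdisc_part: "partition_on U (pdiscrete U)"
proof -
  have "pdiscrete U = (\<lambda>x. {x}) ` U" unfolding pdiscrete_def by blast
  then show ?thesis using partition_on_singletons by metis
qed

lemma ops: assumes p: "partition_on U \<pi>" and S: "S \<subseteq> pns \<pi>" and T: "T \<subseteq> pns \<pi>"
  shows "pjoin (G \<pi> S) (G \<pi> T) \<in> Bpi U \<pi>
      \<and> Phi U \<pi> (pjoin (G \<pi> S) (G \<pi> T)) = Phi U \<pi> (G \<pi> S) \<union> Phi U \<pi> (G \<pi> T)
      \<and> pmeet U (G \<pi> S) (G \<pi> T) \<in> Bpi U \<pi>
      \<and> Phi U \<pi> (pmeet U (G \<pi> S) (G \<pi> T)) = Phi U \<pi> (G \<pi> S) \<inter> Phi U \<pi> (G \<pi> T)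
      \<and> pimp (G \<pi> S) (G \<pi> T) \<in> Bpi U \<pi>
      \<and> Phi U \<pi> (pimp (G \<pi> S) (G \<pi> T)) = (pns \<pi> - Phi U \<pi> (G \<pi> S)) \<union> Phi U \<pi> (G \<pi> T)
      \<and> pimp (G \<pi> S) \<pi> \<in> Bpi U \<pi>
      \<and> Phi U \<pi> (pimp (G \<pi> S) \<pi>) = pns \<pi> - Phi U \<pi> (G \<pi> S)"
proof -
  have Sp: "S \<subseteq> \<pi>" "T \<subseteq> \<pi>" using S T pns_sub by blast+
  have BE: "Bpi U \<pi> = G \<pi> ` Pow (pns \<pi>)" by (rule Bpi_eq[OF p])
  have PS: "Phi U \<pi> (G \<pi> S) = S" "Phi U \<pi> (G \<pi> T) = T" using Phi_G2[OF p] S T by blast+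
  have j: "pjoin (G \<pi> S) (G \<pi> T) = G \<pi> (S \<union> T)" by (rule join_G[OF p Sp])
  have m: "pmeet U (G \<pi> S) (G \<pi> T) = G \<pi> (S \<inter> T)" by (rule meet_G[OF p Sp])
  have i: "pimp (G \<pi> S) (G \<pi> T) = G \<pi> ((pns \<pi> - S) \<union> T)" by (rule imp_G[OF p S T])
  have i2: "pimp (G \<pi> S) \<pi> = G \<pi> (pns \<pi> - S)"
    using imp_G[OF p S, of "{}"] G_empty[of \<pi>] by simp
  have s1: "S \<union> T \<subseteq> pns \<pi>" "S \<inter> T \<subseteq> pns \<pi>" "(pns \<pi> - S) \<union> T \<subseteq> pns \<pi>" "pns \<pi> - S \<subseteq> pns \<pi>"
    using S T by blast+
  show ?thesis unfolding j m i i2 BE PS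
    using s1 Phi_G2[OF p s1(1)] Phi_G2[OF p s1(2)] Phi_G2[OF p s1(3)] Phi_G2[OF p s1(4)]
    by blast
qed

theorem mainTheorem4:
  fixes U :: "'a set" and \<pi> :: "'a set set"
  assumes "U \<noteq> {}" and "partition_on U \<pi>"
  shows
    "(\<forall>\<sigma> \<sigma>'. partition_on U \<sigma> \<and> partition_on U \<sigma>' \<and> pimp \<sigma> \<pi> = pimp \<sigma>' \<pi>
        \<longrightarrow> Phi_of \<pi> \<sigma> = Phi_of \<pi> \<sigma>')
   \<and> (\<forall>\<sigma>. partition_on U \<sigma> \<longrightarrow> Phi U \<pi> (pimp \<sigma> \<pi>) = Phi_of \<pi> \<sigma>)
   \<and> bij_betw (Phi U \<pi>) (Bpi U \<pi>) (Pow (pns \<pi>))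
   \<and> (\<forall>\<sigma> \<tau>. partition_on U \<sigma> \<and> partition_on U \<tau> \<longrightarrow>
        pjoin (pimp \<sigma> \<pi>) (pimp \<tau> \<pi>) \<in> Bpi U \<pi>
      \<and> Phi U \<pi> (pjoin (pimp \<sigma> \<pi>) (pimp \<tau> \<pi>))
          = Phi U \<pi> (pimp \<sigma> \<pi>) \<union> Phi U \<pi> (pimp \<tau> \<pi>)
      \<and> pmeet U (pimp \<sigma> \<pi>) (pimp \<tau> \<pi>) \<in> Bpi U \<pi>
      \<and> Phi U \<pi> (pmeet U (pimp \<sigma> \<pi>) (pimp \<tau> \<pi>))
          = Phi U \<pi> (pimp \<sigma> \<pi>) \<inter> Phi U \<pi> (pimp \<tau> \<pi>)
      \<and> pimp (pimp \<sigma> \<pi>) (pimp \<tau> \<pi>) \<in> Bpi U \<pi>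
      \<and> Phi U \<pi> (pimp (pimp \<sigma> \<pi>) (pimp \<tau> \<pi>))
          = (pns \<pi> - Phi U \<pi> (pimp \<sigma> \<pi>)) \<union> Phi U \<pi> (pimp \<tau> \<pi>)
      \<and> pimp (pimp \<sigma> \<pi>) \<pi> \<in> Bpi U \<pi>
      \<and> Phi U \<pi> (pimp (pimp \<sigma> \<pi>) \<pi>) = pns \<pi> - Phi U \<pi> (pimp \<sigma> \<pi>))
   \<and> \<pi> = pimp (pdiscrete U) \<pi> \<and> \<pi> \<in> Bpi U \<pi> \<and> Phi U \<pi> \<pi> = {}
   \<and> pdiscrete U = pimp \<pi> \<pi> \<and> pdiscrete U \<in> Bpi U \<pi> \<and> Phi U \<pi> (pdiscrete U) = pns \<pi>
   \<and> (\<forall>\<rho>\<in>Bpi U \<pi>. \<forall>\<rho>'\<in>Bpi U \<pi>.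
        pjoin \<rho> \<rho>' \<in> Bpi U \<pi> \<and> Phi U \<pi> (pjoin \<rho> \<rho>') = Phi U \<pi> \<rho> \<union> Phi U \<pi> \<rho>'
      \<and> pmeet U \<rho> \<rho>' \<in> Bpi U \<pi> \<and> Phi U \<pi> (pmeet U \<rho> \<rho>') = Phi U \<pi> \<rho> \<inter> Phi U \<pi> \<rho>')
   \<and> (\<forall>\<rho>\<in>Bpi U \<pi>. pimp \<rho> \<pi> \<in> Bpi U \<pi> \<and> Phi U \<pi> (pimp \<rho> \<pi>) = pns \<pi> - Phi U \<pi> \<rho>)
   \<and> (\<forall>\<rho>\<in>Bpi U \<pi>. partition_on U \<rho> \<and> prefines \<pi> \<rho> \<and> prefines \<rho> (pdiscrete U))"
proof -
  note p = assms(2)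
  have BE: "Bpi U \<pi> = G \<pi> ` Pow (pns \<pi>)" by (rule Bpi_eq[OF p])
  have PO: "Phi_of \<pi> \<sigma> \<subseteq> pns \<pi>" for \<sigma> unfolding Phi_of_def by blast
  have PG: "pimp \<sigma> \<pi> = G \<pi> (Phi_of \<pi> \<sigma>)" if "partition_on U \<sigma>" for \<sigma>
    using pimp_G[OF p that] .
  have c1: "\<forall>\<sigma> \<sigma>'. partition_on U \<sigma> \<and> partition_on U \<sigma>' \<and> pimp \<sigma> \<pi> = pimp \<sigma>' \<pi>
        \<longrightarrow> Phi_of \<pi> \<sigma> = Phi_of \<pi> \<sigma>'"
  proof (intro allI impI)
    fix \<sigma> \<sigma>' assume h: "partition_on U \<sigma> \<and> partition_on U \<sigma>' \<and> pimp \<sigma> \<pi> = pimp \<sigma>' \<pi>"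
    then have "G \<pi> (Phi_of \<pi> \<sigma>) = G \<pi> (Phi_of \<pi> \<sigma>')" using PG by metis
    then show "Phi_of \<pi> \<sigma> = Phi_of \<pi> \<sigma>'" using G_inj PO by metis
  qed
  have c2: "\<forall>\<sigma>. partition_on U \<sigma> \<longrightarrow> Phi U \<pi> (pimp \<sigma> \<pi>) = Phi_of \<pi> \<sigma>"
    using PG Phi_G2[OF p PO] by simp
  have c3: "bij_betw (Phi U \<pi>) (Bpi U \<pi>) (Pow (pns \<pi>))"
    unfolding BE
  proof (rule bij_betw_byWitness[where f' = "G \<pi>"])
    show "\<forall>a\<in>G \<pi> ` Pow (pns \<pi>). G \<pi> (Phi U \<pi> a) = a" using Phi_G2[OF p] by auto
    show "\<forall>a'\<in>Pow (pns \<pi>). Phi U \<pi> (G \<pi> a') = a'" using Phi_G2[OF p] by auto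
    show "Phi U \<pi> ` G \<pi> ` Pow (pns \<pi>) \<subseteq> Pow (pns \<pi>)" using Phi_G2[OF p] by auto
    show "G \<pi> ` Pow (pns \<pi>) \<subseteq> G \<pi> ` Pow (pns \<pi>)" by blast
  qed
  have c4: "\<forall>\<sigma> \<tau>. partition_on U \<sigma> \<and> partition_on U \<tau> \<longrightarrow>
        pjoin (pimp \<sigma> \<pi>) (pimp \<tau> \<pi>) \<in> Bpi U \<pi>
      \<and> Phi U \<pi> (pjoin (pimp \<sigma> \<pi>) (pimp \<tau> \<pi>))
          = Phi U \<pi> (pimp \<sigma> \<pi>) \<union> Phi U \<pi> (pimp \<tau> \<pi>)
      \<and> pmeet U (pimp \<sigma> \<pi>) (pimp \<tau> \<pi>) \<in> Bpi U \<pi>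
      \<and> Phi U \<pi> (pmeet U (pimp \<sigma> \<pi>) (pimp \<tau> \<pi>))
          = Phi U \<pi> (pimp \<sigma> \<pi>) \<inter> Phi U \<pi> (pimp \<tau> \<pi>)
      \<and> pimp (pimp \<sigma> \<pi>) (pimp \<tau> \<pi>) \<in> Bpi U \<pi>
      \<and> Phi U \<pi> (pimp (pimp \<sigma> \<pi>) (pimp \<tau> \<pi>))
          = (pns \<pi> - Phi U \<pi> (pimp \<sigma> \<pi>)) \<union> Phi U \<pi> (pimp \<tau> \<pi>)
      \<and> pimp (pimp \<sigma> \<pi>) \<pi> \<in> Bpi U \<pi>
      \<and> Phi U \<pi> (pimp (pimp \<sigma> \<pi>) \<pi>) = pns \<pi> - Phi U \<pi> (pimp \<sigma> \<pi>)"
  proof (intro allI impI)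
    fix \<sigma> \<tau> assume h: "partition_on U \<sigma> \<and> partition_on U \<tau>"
    then have e: "pimp \<sigma> \<pi> = G \<pi> (Phi_of \<pi> \<sigma>)" "pimp \<tau> \<pi> = G \<pi> (Phi_of \<pi> \<tau>)" using PG by blast+
    show "pjoin (pimp \<sigma> \<pi>) (pimp \<tau> \<pi>) \<in> Bpi U \<pi>
      \<and> Phi U \<pi> (pjoin (pimp \<sigma> \<pi>) (pimp \<tau> \<pi>))
          = Phi U \<pi> (pimp \<sigma> \<pi>) \<union> Phi U \<pi> (pimp \<tau> \<pi>)
      \<and> pmeet U (pimp \<sigma> \<pi>) (pimp \<tau> \<pi>) \<in> Bpi U \<pi>
      \<and> Phi U \<pi> (pmeet U (pimp \<sigma> \<pi>) (pimp \<tau> \<pi>))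
          = Phi U \<pi> (pimp \<sigma> \<pi>) \<inter> Phi U \<pi> (pimp \<tau> \<pi>)
      \<and> pimp (pimp \<sigma> \<pi>) (pimp \<tau> \<pi>) \<in> Bpi U \<pi>
      \<and> Phi U \<pi> (pimp (pimp \<sigma> \<pi>) (pimp \<tau> \<pi>))
          = (pns \<pi> - Phi U \<pi> (pimp \<sigma> \<pi>)) \<union> Phi U \<pi> (pimp \<tau> \<pi>)
      \<and> pimp (pimp \<sigma> \<pi>) \<pi> \<in> Bpi U \<pi>
      \<and> Phi U \<pi> (pimp (pimp \<sigma> \<pi>) \<pi>) = pns \<pi> - Phi U \<pi> (pimp \<sigma> \<pi>)"
      unfolding e by (rule ops[OF p PO PO])
  qed
  have Pd: "Phi_of \<pi> (pdiscrete U) = {}" unfolding Phi_of_def pns_def pdiscrete_def by blast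
  have Pp: "Phi_of \<pi> \<pi> = pns \<pi>" unfolding Phi_of_def pns_def by blast
  have c5: "\<pi> = pimp (pdiscrete U) \<pi>" using PG[OF pdisc_part] Pd G_empty by metis
  have c6: "\<pi> \<in> Bpi U \<pi>" unfolding BE using G_empty[of \<pi>] by blast
  have c7: "Phi U \<pi> \<pi> = {}" using Phi_G2[OF p, of "{}"] G_empty[of \<pi>] by simp
  have c8: "pdiscrete U = pimp \<pi> \<pi>" using PG[OF p] Pp G_pns[OF p] by metis
  have c9: "pdiscrete U \<in> Bpi U \<pi>" unfolding BE using G_pns[OF p] by blast
  have c10: "Phi U \<pi> (pdiscrete U) = pns \<pi>" using Phi_G2[OF p, of "pns \<pi>"] G_pns[OF p] by simp
  have c11: "\<forall>\<rho>\<in>Bpi U \<pi>. \<forall>\<rho>'\<in>Bpi U \<pi>.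
        pjoin \<rho> \<rho>' \<in> Bpi U \<pi> \<and> Phi U \<pi> (pjoin \<rho> \<rho>') = Phi U \<pi> \<rho> \<union> Phi U \<pi> \<rho>'
      \<and> pmeet U \<rho> \<rho>' \<in> Bpi U \<pi> \<and> Phi U \<pi> (pmeet U \<rho> \<rho>') = Phi U \<pi> \<rho> \<inter> Phi U \<pi> \<rho>'"
  proof (intro ballI)
    fix \<rho> \<rho>' assume "\<rho> \<in> Bpi U \<pi>" "\<rho>' \<in> Bpi U \<pi>"
    then obtain S T where ST: "S \<subseteq> pns \<pi>" "T \<subseteq> pns \<pi>" "\<rho> = G \<pi> S" "\<rho>' = G \<pi> T"
      unfolding BE by blast
    show "pjoin \<rho> \<rho>' \<in> Bpi U \<pi> \<and> Phi U \<pi> (pjoin \<rho> \<rho>') = Phi U \<pi> \<rho> \<union> Phi U \<pi> \<rho>'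
      \<and> pmeet U \<rho> \<rho>' \<in> Bpi U \<pi> \<and> Phi U \<pi> (pmeet U \<rho> \<rho>') = Phi U \<pi> \<rho> \<inter> Phi U \<pi> \<rho>'"
      using ops[OF p ST(1,2)] unfolding ST(3,4) by blast
  qed
  have c12: "\<forall>\<rho>\<in>Bpi U \<pi>. pimp \<rho> \<pi> \<in> Bpi U \<pi> \<and> Phi U \<pi> (pimp \<rho> \<pi>) = pns \<pi> - Phi U \<pi> \<rho>"
  proof
    fix \<rho> assume "\<rho> \<in> Bpi U \<pi>"
    then obtain S where S: "S \<subseteq> pns \<pi>" "\<rho> = G \<pi> S" unfolding BE by blast
    show "pimp \<rho> \<pi> \<in> Bpi U \<pi> \<and> Phi U \<pi> (pimp \<rho> \<pi>) = pns \<pi> - Phi U \<pi> \<rho>"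
      using ops[OF p S(1) S(1)] unfolding S(2) by blast
  qed
  have c13: "\<forall>\<rho>\<in>Bpi U \<pi>. partition_on U \<rho> \<and> prefines \<pi> \<rho> \<and> prefines \<rho> (pdiscrete U)"
  proof
    fix \<rho> assume "\<rho> \<in> Bpi U \<pi>"
    then obtain S where S: "S \<subseteq> pns \<pi>" "\<rho> = G \<pi> S" unfolding BE by blast
    then have "S \<subseteq> \<pi>" using pns_sub by blast
    then show "partition_on U \<rho> \<and> prefines \<pi> \<rho> \<and> prefines \<rho> (pdiscrete U)"
      using G_part[OF p] G_ref[OF p] S(2) by blast
  qed
  show ?thesis using c1 c2 c3 c4 c5 c6 c7 c8 c9 c10 c11 c12 c13 by blast
qed

end
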